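(* Let $G$ be a graph containing neither the cycle $C_4$ nor the cycle $C_6$ as a subgraph. For every MLD-set $S\subseteq V(G)$, the set $S\cup\pi(S)$ is a locating-dominating set of $G$. Consequently, $\gamma_L(G)\le \gamma_M(G)^2$.
   Context: All graphs are finite, simple, undirected and connected, with at least 2 vertices; $d(u,v)$ is the shortest-path distance and $N(x)$ the open neighborhood of $x$. A set $S\subseteq V(G)$ is resolving if for all distinct $x,y\in V(G)$ there is $u\in S$ with $d(u,x)\ne d(u,y)$; dominating if every vertex not in $S$ has a neighbor in $S$. An MLD-set is a set that is both resolving and dominating; $\gamma_M(G)$ is the minimum size of an MLD-set. A locating-dominating set (LD-set) is a dominating set $S$ such that $N(x)\cap S\ne N(y)\cap S$ for all distinct $x,y\in V(G)\setminus S$; $\gamma_L(G)$ is its minimum size. For $S\subseteq V(G)$ and $u,v\in S$, $\pi(u,v)$ is the set of vertices $u',v'$ such that $(u,u',v',v)$ is a path in $G$ (four distinct vertices with $uu',u'v',v'v\in E(G)$), and $\pi(S)=\bigcup_{u,v\in S}\pi(u,v)$. *)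

theory Defs
  imports Main
begin

fun walk :: "('a \<Rightarrow> 'a \<Rightarrow> bool) \<Rightarrow> 'a list \<Rightarrow> bool" where
  "walk E [] = False"
| "walk E [x] = True"
| "walk E (x # y # xs) = (E x y \<and> walk E (y # xs))"

definition connected_graph :: "'a set \<Rightarrow> ('a \<Rightarrow> 'a \<Rightarrow> bool) \<Rightarrow> bool" where
  "connected_graph V E \<longleftrightarrow>
     (\<forall>u\<in>V. \<forall>v\<in>V. \<exists>p. walk E p \<and> hd p = u \<and> last p = v \<and> set p \<subseteq> V)"

definition graph :: "'a set \<Rightarrow> ('a \<Rightarrow> 'a \<Rightarrow> bool) \<Rightarrow> bool" where
  "graph V E \<longleftrightarrow> finite V \<and> card V \<ge> 2
     \<and> (\<forall>x y. E x y \<longrightarrow> x \<in> V \<and> y \<in> V)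
     \<and> (\<forall>x y. E x y \<longrightarrow> E y x)
     \<and> (\<forall>x. \<not> E x x)
     \<and> connected_graph V E"

definition gdist :: "('a \<Rightarrow> 'a \<Rightarrow> bool) \<Rightarrow> 'a \<Rightarrow> 'a \<Rightarrow> nat" where
  "gdist E u v = (LEAST n. \<exists>p. walk E p \<and> hd p = u \<and> last p = v \<and> length p = Suc n)"

definition nbhd :: "'a set \<Rightarrow> ('a \<Rightarrow> 'a \<Rightarrow> bool) \<Rightarrow> 'a \<Rightarrow> 'a set" where
  "nbhd V E x = {y \<in> V. E x y}"

definition has_C4 :: "'a set \<Rightarrow> ('a \<Rightarrow> 'a \<Rightarrow> bool) \<Rightarrow> bool" where
  "has_C4 V E \<longleftrightarrow> (\<exists>a b c d. distinct [a,b,c,d] \<and> set [a,b,c,d] \<subseteq> V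
      \<and> E a b \<and> E b c \<and> E c d \<and> E d a)"

definition has_C6 :: "'a set \<Rightarrow> ('a \<Rightarrow> 'a \<Rightarrow> bool) \<Rightarrow> bool" where
  "has_C6 V E \<longleftrightarrow> (\<exists>a b c d e f. distinct [a,b,c,d,e,f] \<and> set [a,b,c,d,e,f] \<subseteq> V
      \<and> E a b \<and> E b c \<and> E c d \<and> E d e \<and> E e f \<and> E f a)"

definition resolving :: "'a set \<Rightarrow> ('a \<Rightarrow> 'a \<Rightarrow> bool) \<Rightarrow> 'a set \<Rightarrow> bool" where
  "resolving V E S \<longleftrightarrow> S \<subseteq> V \<and>
     (\<forall>x\<in>V. \<forall>y\<in>V. x \<noteq> y \<longrightarrow> (\<exists>u\<in>S. gdist E u x \<noteq> gdist E u y))"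

definition dominating :: "'a set \<Rightarrow> ('a \<Rightarrow> 'a \<Rightarrow> bool) \<Rightarrow> 'a set \<Rightarrow> bool" where
  "dominating V E S \<longleftrightarrow> S \<subseteq> V \<and> (\<forall>x\<in>V - S. \<exists>y\<in>S. E x y)"

definition MLD_set :: "'a set \<Rightarrow> ('a \<Rightarrow> 'a \<Rightarrow> bool) \<Rightarrow> 'a set \<Rightarrow> bool" where
  "MLD_set V E S \<longleftrightarrow> resolving V E S \<and> dominating V E S"

definition LD_set :: "'a set \<Rightarrow> ('a \<Rightarrow> 'a \<Rightarrow> bool) \<Rightarrow> 'a set \<Rightarrow> bool" where
  "LD_set V E S \<longleftrightarrow> dominating V E S \<and>
     (\<forall>x\<in>V - S. \<forall>y\<in>V - S. x \<noteq> y \<longrightarrow> nbhd V E x \<inter> S \<noteq> nbhd V E y \<inter> S)"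

definition gamma_M :: "'a set \<Rightarrow> ('a \<Rightarrow> 'a \<Rightarrow> bool) \<Rightarrow> nat" where
  "gamma_M V E = Min {card S | S. MLD_set V E S}"

definition gamma_L :: "'a set \<Rightarrow> ('a \<Rightarrow> 'a \<Rightarrow> bool) \<Rightarrow> nat" where
  "gamma_L V E = Min {card S | S. LD_set V E S}"

definition pi_pair :: "('a \<Rightarrow> 'a \<Rightarrow> bool) \<Rightarrow> 'a \<Rightarrow> 'a \<Rightarrow> 'a set" where
  "pi_pair E u v = {w. \<exists>u' v'. (w = u' \<or> w = v') \<and> distinct [u,u',v',v]
       \<and> E u u' \<and> E u' v' \<and> E v' v}"

definition pi_set :: "('a \<Rightarrow> 'a \<Rightarrow> bool) \<Rightarrow> 'a set \<Rightarrow> 'a set" where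
  "pi_set E S = (\<Union>u\<in>S. \<Union>v\<in>S. pi_pair E u v)"

end

theory Submission
  imports Defs
begin

definition reach :: "('a \<Rightarrow> 'a \<Rightarrow> bool) \<Rightarrow> 'a \<Rightarrow> 'a \<Rightarrow> nat \<Rightarrow> bool" where
  "reach E u v n \<longleftrightarrow> (\<exists>p. walk E p \<and> hd p = u \<and> last p = v \<and> length p = Suc n)"

lemma walk_snoc: "walk E (xs @ [a, b]) \<longleftrightarrow> walk E (xs @ [a]) \<and> E a b"
proof (induction xs)
  case Nil then show ?case by simp
next
  case (Cons y ys)
  then show ?case by (cases ys) auto
qed

lemma reach_0: "reach E u v 0 \<longleftrightarrow> u = v"
  unfolding reach_def
proof
  assume "\<exists>p. walk E p \<and> hd p = u \<and> last p = v \<and> length p = Suc 0"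
  then obtain p where "hd p = u" "last p = v" "length p = Suc 0" by blast
  then show "u = v" by (cases p) auto
next
  assume "u = v" then show "\<exists>p. walk E p \<and> hd p = u \<and> last p = v \<and> length p = Suc 0"
    by (intro exI[of _ "[u]"]) auto
qed

lemma reach_Suc: "reach E u v (Suc n) \<longleftrightarrow> (\<exists>w. reach E u w n \<and> E w v)"
proof
  assume "reach E u v (Suc n)"
  then obtain p where p: "walk E p" "hd p = u" "last p = v" "length p = Suc (Suc n)"
    unfolding reach_def by blast
  obtain b a r where rp: "rev p = b # a # r" using p(4)
    by (metis length_rev Suc_length_conv)
  define q where "q = rev r"
  have pq: "p = q @ [a, b]" unfolding q_def
    by (metis rp rev_rev_ident rev.simps(2) append.assoc append_Cons append_Nil)
  have w1: "walk E (q @ [a])" and e: "E a b" using p(1) walk_snoc pq by metis+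
  have "reach E u a n" unfolding reach_def
    using w1 p pq by (intro exI[of _ "q @ [a]"]) (cases q, auto)
  then show "\<exists>w. reach E u w n \<and> E w v" using e p pq by auto
next
  assume "\<exists>w. reach E u w n \<and> E w v"
  then obtain w p where p: "walk E p" "hd p = u" "last p = w" "length p = Suc n" "E w v"
    unfolding reach_def by blast
  obtain q where q: "p = q @ [w]" using p(3,4)
    by (metis append_butlast_last_id list.size(3) nat.distinct(1))
  have "walk E (q @ [w, v])" using walk_snoc p q by metis
  then show "reach E u v (Suc n)" unfolding reach_def
    using p q by (intro exI[of _ "q @ [w, v]"]) (cases q, auto)
qed

lemma gdist_reach: "gdist E u v = (LEAST n. reach E u v n)"
  unfolding gdist_def reach_def by simp

lemma reach_exists:
  assumes "graph V E" "u \<in> V" "v \<in> V" shows "\<exists>n. reach E u v n"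
proof -
  have "connected_graph V E" using assms(1) unfolding graph_def by blast
  then have "\<exists>p. walk E p \<and> hd p = u \<and> last p = v \<and> set p \<subseteq> V"
    using assms(2,3) unfolding connected_graph_def by blast
  then obtain p where p: "walk E p" "hd p = u" "last p = v" by blast
  then have "p \<noteq> []" by auto
  then obtain n where "length p = Suc n" by (cases p) auto
  then show ?thesis using p unfolding reach_def by blast
qed

lemma gdist_Suc:
  assumes ex: "\<exists>n. reach E u s n" and es: "E s x" and ux: "u \<noteq> x"
    and bk: "\<And>n. reach E u x (Suc n) \<Longrightarrow> \<exists>m\<le>n. reach E u s m"
  shows "gdist E u x = Suc (gdist E u s)"
proof -
  define D where "D = gdist E u s"
  have rD: "reach E u s D" unfolding D_def gdist_reach using ex by (rule LeastI_ex)
  have rx: "reach E u x (Suc D)" using rD es by (intro reach_Suc[THEN iffD2]) blast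
  have le: "gdist E u x \<le> Suc D" unfolding gdist_reach using rx by (rule Least_le)
  define G where "G = gdist E u x"
  have rG: "reach E u x G" unfolding G_def gdist_reach using rx by (rule LeastI)
  have "G \<noteq> 0"
  proof
    assume "G = 0" then have "u = x" using rG by (simp add: reach_0)
    then show False using ux by simp
  qed
  then obtain n where n: "G = Suc n" by (cases G) auto
  then obtain m where m: "m \<le> n" "reach E u s m" using bk[of n] rG by auto
  have "D \<le> m" unfolding D_def gdist_reach using m(2) by (rule Least_le)
  then show ?thesis using le n m unfolding G_def D_def by simp
qed

definition Qpair :: "('a \<Rightarrow> 'a \<Rightarrow> bool) \<Rightarrow> 'a \<Rightarrow> 'a \<Rightarrow> 'a set" where
  "Qpair E t s = {q. \<exists>p. distinct [t,p,q,s] \<and> E t p \<and> E p q \<and> E q s \<and> \<not> E t q}"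

definition Qset :: "('a \<Rightarrow> 'a \<Rightarrow> bool) \<Rightarrow> 'a set \<Rightarrow> 'a set" where
  "Qset E S = (\<Union>t\<in>S. \<Union>s\<in>S. Qpair E t s)"

lemma Qpair_sub: "Qpair E t s \<subseteq> pi_pair E t s"
proof
  fix q assume "q \<in> Qpair E t s"
  then obtain p where h: "distinct [t,p,q,s]" "E t p" "E p q" "E q s"
    unfolding Qpair_def by blast
  have "\<exists>u' v'. (q = u' \<or> q = v') \<and> distinct [t,u',v',s] \<and> E t u' \<and> E u' v' \<and> E v' s"
    using h by (intro exI[of _ p] exI[of _ q] conjI) simp_all
  then show "q \<in> pi_pair E t s" unfolding pi_pair_def by simp
qed

lemma Qset_sub: "Qset E S \<subseteq> pi_set E S"
  unfolding Qset_def pi_set_def by (intro UN_mono order_refl Qpair_sub)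

lemma Qpair_unique:
  assumes g: "graph V E" and c4: "\<not> has_C4 V E" and c6: "\<not> has_C6 V E"
    and q1: "q1 \<in> Qpair E t s" and q2: "q2 \<in> Qpair E t s"
  shows "q1 = q2"
proof (rule ccontr)
  assume ne: "q1 \<noteq> q2"
  have sym: "\<And>a b. E a b \<Longrightarrow> E b a" and inV: "\<And>a b. E a b \<Longrightarrow> a \<in> V \<and> b \<in> V"
    using g unfolding graph_def by blast+
  obtain p1 where p1: "distinct [t,p1,q1,s]" "E t p1" "E p1 q1" "E q1 s" "\<not> E t q1"
    using q1 unfolding Qpair_def by blast
  obtain p2 where p2: "distinct [t,p2,q2,s]" "E t p2" "E p2 q2" "E q2 s" "\<not> E t q2"
    using q2 unfolding Qpair_def by blast
  show False
  proof (cases "p1 = p2")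
    case True
    have d: "distinct [p1,q1,s,q2]" using True p1(1) p2(1) ne by auto
    have e: "E p1 q1" "E q1 s" "E s q2" "E q2 p1"
      using p1(3,4) sym[OF p2(4)] sym[OF p2(3)] True by auto
    have v: "set [p1,q1,s,q2] \<subseteq> V" using inV[OF e(1)] inV[OF e(3)] by auto
    have "has_C4 V E" unfolding has_C4_def using d e v by blast
    then show False using c4 by blast
  next
    case False
    have "p1 \<noteq> q2" using p1 p2 by auto
    moreover have "p2 \<noteq> q1" using p1 p2 by auto
    ultimately have d: "distinct [t,p1,q1,s,q2,p2]" using False p1(1) p2(1) ne by auto
    have e: "E t p1" "E p1 q1" "E q1 s" "E s q2" "E q2 p2" "E p2 t"
      using p1(2,3,4) sym[OF p2(4)] sym[OF p2(3)] sym[OF p2(2)] by auto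
    have v: "set [t,p1,q1,s,q2,p2] \<subseteq> V"
      using inV[OF e(1)] inV[OF e(3)] inV[OF e(5)] by auto
    have "has_C6 V E" unfolding has_C6_def using d e v by blast
    then show False using c6 by blast
  qed
qed

lemma key_dist:
  assumes g: "graph V E" and mld: "MLD_set V E S" and ST: "S \<subseteq> T" and QT: "Qset E S \<subseteq> T"
    and xV: "x \<in> V" and xT: "x \<notin> T" and sS: "s \<in> S" and exs: "E x s"
    and A: "\<And>w. E x w \<Longrightarrow> w \<noteq> s \<Longrightarrow> w \<notin> T"
    and uS: "u \<in> S"
  shows "gdist E u x = Suc (gdist E u s)"
proof -
  have sym: "\<And>a b. E a b \<Longrightarrow> E b a" and inV: "\<And>a b. E a b \<Longrightarrow> a \<in> V \<and> b \<in> V"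
    and irr: "\<And>a. \<not> E a a"
    using g unfolding graph_def by blast+
  have dom: "\<And>z. z \<in> V \<Longrightarrow> z \<notin> S \<Longrightarrow> \<exists>t\<in>S. E z t" and SV: "S \<subseteq> V"
    using mld unfolding MLD_set_def dominating_def by blast+
  have inQ: "\<And>t q p. t \<in> S \<Longrightarrow> distinct [t,p,q,s] \<Longrightarrow> E t p \<Longrightarrow> E p q \<Longrightarrow> E q s \<Longrightarrow> \<not> E t q
      \<Longrightarrow> q \<in> T"
  proof -
    fix t q p assume "t \<in> S" "distinct [t,p,q,s]" "E t p" "E p q" "E q s" "\<not> E t q"
    then have "q \<in> Qpair E t s" unfolding Qpair_def by blast
    then show "q \<in> T" using QT sS \<open>t \<in> S\<close> unfolding Qset_def by blast
  qed
  have B: "\<And>w. E x w \<Longrightarrow> w \<noteq> s \<Longrightarrow> E w s \<and> (\<forall>t\<in>S. E w t \<longrightarrow> t = s)"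
  proof -
    fix w assume xw: "E x w" and ws: "w \<noteq> s"
    have wT: "w \<notin> T" using A xw ws by blast
    have wS: "w \<notin> S" using wT ST by blast
    have allS: "\<forall>t\<in>S. E w t \<longrightarrow> t = s"
    proof (intro ballI impI, rule ccontr)
      fix t assume tS: "t \<in> S" and wt: "E w t" and ts: "t \<noteq> s"
      have ntx: "\<not> E t x" using A[of t] ts tS ST sym by blast
      have "distinct [t,w,x,s]" using tS wS xT ST ts ws xw irr sS exs by auto
      then have "x \<in> T" using inQ[of t w x] tS wt sym xw exs ntx by blast
      then show False using xT by blast
    qed
    moreover obtain t where "t \<in> S" "E w t" using dom[of w] inV xw wS by blast
    ultimately show "E w s \<and> (\<forall>t\<in>S. E w t \<longrightarrow> t = s)" by blast
  qed
  have C: "\<And>w z. E x w \<Longrightarrow> w \<noteq> s \<Longrightarrow> E w z \<Longrightarrow> z = s \<or> E z s"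
  proof -
    fix w z assume xw: "E x w" and ws: "w \<noteq> s" and wz: "E w z"
    have wT: "w \<notin> T" using A xw ws by blast
    have wS: "w \<notin> S" using wT ST by blast
    show "z = s \<or> E z s"
    proof (rule ccontr)
      assume nz: "\<not> (z = s \<or> E z s)"
      have zx: "z \<noteq> x" using nz exs by blast
      have zS: "z \<notin> S"
      proof
        assume zS: "z \<in> S"
        have nzx: "\<not> E z x" using A[of z] nz zS ST sym by blast
        have "distinct [z,w,x,s]" using zS wS xT ST sS nz ws xw irr wz zx by auto
        then have "x \<in> T" using inQ[of z w x] zS wz sym xw exs nzx by blast
        then show False using xT by blast
      qed
      obtain t where tS: "t \<in> S" and zt: "E z t" using dom[of z] inV wz zS by blast
      have ts: "t \<noteq> s" using zt nz sym by blast
      have ntw: "\<not> E t w" using B[OF xw ws] tS ts sym by blast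
      have "distinct [t,z,w,s]" using tS zS wS nz ws ts irr wz by auto
      then have "w \<in> T" using inQ[of t z w] tS zt sym wz B[OF xw ws] ntw by blast
      then show False using wT by blast
    qed
  qed
  show ?thesis
  proof (rule gdist_Suc)
    show "\<exists>n. reach E u s n" using reach_exists[OF g] uS sS SV by blast
    show "E s x" using sym exs by blast
    show "u \<noteq> x" using uS xT ST by blast
    fix n assume "reach E u x (Suc n)"
    then obtain w where rw: "reach E u w n" and wx: "E w x" by (auto simp only: reach_Suc)
    show "\<exists>m\<le>n. reach E u s m"
    proof (cases "w = s")
      case True then show ?thesis using rw by blast
    next
      case False
      have xw: "E x w" using wx sym by blast
      have wu: "w \<noteq> u" using A[OF xw False] uS ST by blast
      then have "n \<noteq> 0" using rw by (cases n) (auto simp: reach_0)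
      then obtain n' where n': "n = Suc n'" by (cases n) auto
      then obtain z where rz: "reach E u z n'" and zw: "E z w" using rw by (auto simp only: reach_Suc)
      have "z = s \<or> E z s" using C[OF xw False] zw sym by blast
      then show ?thesis
      proof
        assume "z = s" then show ?thesis using rz n' by (intro exI[of _ n']) auto
      next
        assume "E z s" then have "reach E u s (Suc n')" using rz by (intro reach_Suc[THEN iffD2]) blast
        then have "reach E u s n" using n' by simp
        then show ?thesis by blast
      qed
    qed
  qed
qed

lemma LD_gen:
  assumes g: "graph V E" and c4: "\<not> has_C4 V E" and mld: "MLD_set V E S"
    and ST: "S \<subseteq> T" and TV: "T \<subseteq> V" and QT: "Qset E S \<subseteq> T"
  shows "LD_set V E T"
proof -
  have sym: "\<And>a b. E a b \<Longrightarrow> E b a" and inV: "\<And>a b. E a b \<Longrightarrow> a \<in> V \<and> b \<in> V"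
    and irr: "\<And>a. \<not> E a a"
    using g unfolding graph_def by blast+
  have dom: "\<And>z. z \<in> V \<Longrightarrow> z \<notin> S \<Longrightarrow> \<exists>t\<in>S. E z t"
    using mld unfolding MLD_set_def dominating_def by blast
  have res: "\<And>x y. x \<in> V \<Longrightarrow> y \<in> V \<Longrightarrow> x \<noteq> y \<Longrightarrow> \<exists>u\<in>S. gdist E u x \<noteq> gdist E u y"
    using mld unfolding MLD_set_def resolving_def by blast
  have "dominating V E T" unfolding dominating_def using TV dom ST by blast
  moreover have "\<forall>x\<in>V - T. \<forall>y\<in>V - T. x \<noteq> y \<longrightarrow> nbhd V E x \<inter> T \<noteq> nbhd V E y \<inter> T"
  proof (intro ballI impI notI)
    fix x y assume x: "x \<in> V - T" and y: "y \<in> V - T" and xy: "x \<noteq> y"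
      and eq: "nbhd V E x \<inter> T = nbhd V E y \<inter> T"
    obtain s where sS: "s \<in> S" and xs: "E x s" using dom x ST by blast
    have "s \<in> nbhd V E x \<inter> T" using sS ST xs inV unfolding nbhd_def by blast
    then have ys: "E y s" using eq unfolding nbhd_def by blast
    have A: "\<And>a b w. a \<in> V - T \<Longrightarrow> b \<in> V - T \<Longrightarrow> a \<noteq> b \<Longrightarrow> E a s \<Longrightarrow> E b s
        \<Longrightarrow> nbhd V E a \<inter> T = nbhd V E b \<inter> T \<Longrightarrow> E a w \<Longrightarrow> w \<noteq> s \<Longrightarrow> w \<notin> T"
    proof
      fix a b w assume a: "a \<in> V - T" and b: "b \<in> V - T" and ab: "a \<noteq> b" and as: "E a s"
        and bs: "E b s" and eqab: "nbhd V E a \<inter> T = nbhd V E b \<inter> T" and aw: "E a w"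
        and ws: "w \<noteq> s" and wT: "w \<in> T"
      have "w \<in> nbhd V E a \<inter> T" using aw wT inV unfolding nbhd_def by blast
      then have bw: "E b w" using eqab unfolding nbhd_def by blast
      have d: "distinct [a,w,b,s]" using a b ab ws wT sS ST irr[of a] aw by auto
      have e: "E a w" "E w b" "E b s" "E s a" using aw sym[OF bw] bs sym[OF as] by auto
      have v: "set [a,w,b,s] \<subseteq> V" using inV[OF e(1)] inV[OF e(3)] by auto
      have "has_C4 V E" unfolding has_C4_def using d e v by blast
      then show False using c4 by blast
    qed
    obtain u where uS: "u \<in> S" and ne: "gdist E u x \<noteq> gdist E u y" using res x y xy by blast
    have "gdist E u x = Suc (gdist E u s)"
      using key_dist[OF g mld ST QT _ _ sS xs _ uS] A[OF x y xy xs ys eq] x by blast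
    moreover have "gdist E u y = Suc (gdist E u s)"
      using key_dist[OF g mld ST QT _ _ sS ys _ uS] A[OF y x xy[symmetric] ys xs eq[symmetric]] y
      by blast
    ultimately show False using ne by simp
  qed
  ultimately show ?thesis unfolding LD_set_def by blast
qed

lemma pi_pair_V:
  assumes inV: "\<And>a b. E a b \<Longrightarrow> a \<in> V \<and> b \<in> V" shows "pi_pair E u v \<subseteq> V"
proof
  fix w assume "w \<in> pi_pair E u v"
  then obtain u' v' where "w = u' \<or> w = v'" "E u u'" "E v' v"
    unfolding pi_pair_def by blast
  then show "w \<in> V" using inV by blast
qed

lemma Qset_V:
  assumes inV: "\<And>a b. E a b \<Longrightarrow> a \<in> V \<and> b \<in> V" shows "Qset E S \<subseteq> V"
proof -
  have "Qset E S \<subseteq> pi_set E S" by (rule Qset_sub)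
  also have "pi_set E S \<subseteq> V" unfolding pi_set_def using pi_pair_V[OF inV] by blast
  finally show ?thesis .
qed

lemma card_set_fin:
  assumes "finite V" "\<And>S. P S \<Longrightarrow> S \<subseteq> V" shows "finite {card S | S. P S}"
proof -
  have "{card S | S. P S} \<subseteq> card ` Pow V" using assms(2) by auto
  then show ?thesis using assms(1) finite_subset by blast
qed

theorem proposition5:
  fixes V :: "'a set" and E :: "'a \<Rightarrow> 'a \<Rightarrow> bool"
  assumes "graph V E"
    and "\<not> has_C4 V E"
    and "\<not> has_C6 V E"
  shows "(\<forall>S. MLD_set V E S \<longrightarrow> LD_set V E (S \<union> pi_set E S))
         \<and> gamma_L V E \<le> (gamma_M V E)^2"
proof -
  have g: "graph V E" using assms(1) .
  have inV: "\<And>a b. E a b \<Longrightarrow> a \<in> V \<and> b \<in> V" and fin: "finite V"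
    using g unfolding graph_def by blast+
  have part1: "\<forall>S. MLD_set V E S \<longrightarrow> LD_set V E (S \<union> pi_set E S)"
  proof (intro allI impI)
    fix S assume mld: "MLD_set V E S"
    have SV: "S \<subseteq> V" using mld unfolding MLD_set_def resolving_def by blast
    have "pi_set E S \<subseteq> V" using Qset_V[OF inV] pi_pair_V[OF inV] unfolding pi_set_def by blast
    then show "LD_set V E (S \<union> pi_set E S)"
      using Qset_sub[of E S] SV by (intro LD_gen[OF g assms(2) mld]) auto
  qed
  have gd0: "\<And>x. gdist E x x = 0"
    unfolding gdist_reach by (rule Least_eq_0) (simp add: reach_0)
  have gdne: "\<And>x y. x \<in> V \<Longrightarrow> y \<in> V \<Longrightarrow> x \<noteq> y \<Longrightarrow> gdist E x y \<noteq> 0"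
  proof
    fix x y assume "x \<in> V" "y \<in> V" "x \<noteq> y" "gdist E x y = 0"
    moreover have "reach E x y (gdist E x y)" unfolding gdist_reach
      using reach_exists[OF g \<open>x \<in> V\<close> \<open>y \<in> V\<close>] by (rule LeastI_ex)
    ultimately show False by (simp add: reach_0)
  qed
  have VM: "MLD_set V E V" unfolding MLD_set_def resolving_def dominating_def
  proof (intro conjI ballI impI)
    fix x y assume "x \<in> V" "y \<in> V" "x \<noteq> y"
    then show "\<exists>u\<in>V. gdist E u x \<noteq> gdist E u y"
      using gd0[of x] gdne[of x y] by (intro bexI[of _ x]) auto
  qed auto
  define M where "M = {card S | S. MLD_set V E S}"
  have Mfin: "finite M" unfolding M_def
    by (rule card_set_fin[OF fin]) (simp add: MLD_set_def resolving_def)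
  have "card V \<in> M" unfolding M_def using VM by blast
  then have "M \<noteq> {}" by blast
  have "gamma_M V E \<in> M" unfolding gamma_M_def M_def[symmetric]
    by (rule Min_in[OF Mfin \<open>M \<noteq> {}\<close>])
  then have "\<exists>S. gamma_M V E = card S \<and> MLD_set V E S" unfolding M_def by simp
  then obtain S where mld: "MLD_set V E S" and cS: "card S = gamma_M V E" by metis
  have SV: "S \<subseteq> V" using mld unfolding MLD_set_def resolving_def by blast
  define T where "T = S \<union> Qset E S"
  have QV: "Qset E S \<subseteq> V" by (rule Qset_V[OF inV])
  have LDT: "LD_set V E T" unfolding T_def using SV QV by (intro LD_gen[OF g assms(2) mld]) auto
  define f where "f = (\<lambda>(t, s). if Qpair E t s = {} then t else (SOME q. q \<in> Qpair E t s))"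
  have "T \<subseteq> f ` (S \<times> S)"
  proof
    fix z assume "z \<in> T"
    then have "z \<in> S \<or> (\<exists>t\<in>S. \<exists>s\<in>S. z \<in> Qpair E t s)"
      unfolding T_def Qset_def by simp
    then consider "z \<in> S" | t s where "t \<in> S" "s \<in> S" "z \<in> Qpair E t s"
      by blast
    then show "z \<in> f ` (S \<times> S)"
    proof cases
      case 1
      have "Qpair E z z = {}" unfolding Qpair_def by auto
      then have "f (z, z) = z" unfolding f_def by simp
      then show ?thesis using 1 by (intro rev_image_eqI[of "(z,z)"]) auto
    next
      case 2
      have ne: "Qpair E t s \<noteq> {}" using 2 by blast
      have "(SOME q. q \<in> Qpair E t s) \<in> Qpair E t s" using 2 by (metis someI)
      then have "f (t, s) = z"
        using Qpair_unique[OF g assms(2,3) 2(3)] ne unfolding f_def by auto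
      then show ?thesis using 2 by (intro rev_image_eqI[of "(t,s)"]) auto
    qed
  qed
  moreover have "finite S" using SV fin finite_subset by blast
  ultimately have cT: "card T \<le> card S * card S"
  proof -
    assume sub: "T \<subseteq> f ` (S \<times> S)" and fS: "finite S"
    have "card T \<le> card (f ` (S \<times> S))" using sub fS by (intro card_mono) auto
    also have "\<dots> \<le> card (S \<times> S)" using fS by (intro card_image_le) auto
    also have "\<dots> = card S * card S" by (rule card_cartesian_product)
    finally show ?thesis .
  qed
  have TV: "T \<subseteq> V" unfolding T_def using SV QV by blast
  have Lfin: "finite {card S | S. LD_set V E S}"
    by (rule card_set_fin[OF fin]) (simp add: LD_set_def dominating_def)
  have "card T \<in> {card S | S. LD_set V E S}" using LDT by blast
  then have "gamma_L V E \<le> card T" unfolding gamma_L_def by (rule Min_le[OF Lfin])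
  then have "gamma_L V E \<le> (gamma_M V E)^2" using cT cS by (simp add: power2_eq_square)
  then show ?thesis using part1 by blast
qed

end
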